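(* Let $M\in\mathbb{R}^{n\times n}$ be symmetric positive definite, $\delta_i,\delta_{i-1}>0$, $\epsilon\ge0$, and let $\bar P:\mathbb{R}^n\to\mathbb{R}$ (with the control value held fixed) be differentiable and $L$-weakly convex. For $\theta_i,\theta_{i-1},\theta_{i-2}\in\mathbb{R}^n$ let $$\bar E_i(\theta_i)=\frac{1}{2\delta_i^2}\Big\|\theta_i-\big(1+\tfrac{\delta_i}{\delta_{i-1}}\big)\theta_{i-1}+\tfrac{\delta_i}{\delta_{i-1}}\theta_{i-2}\Big\|_M^2+\bar P(\theta_i),$$ and suppose $\theta_i$ is an $\epsilon$-critical point, i.e. $2\Lambda_i\le\epsilon^2$ where $\Lambda_i=\frac12\|\nabla\bar E_i(\theta_i)\|^2$. Then $$\Big[\tfrac12\Big\|\tfrac{\theta_i-\theta_{i-1}}{\delta_i}\Big\|_M^2+\bar P(\theta_i)\Big]-\Big[\tfrac12\Big\|\tfrac{\theta_{i-1}-\theta_{i-2}}{\delta_{i-1}}\Big\|_M^2+\bar P(\theta_{i-1})\Big]\le\frac{L\delta_i^2+\delta_i}{2\sigma_{\min}(M)}\Big\|\frac{\theta_i-\theta_{i-1}}{\delta_i}\Big\|_M^2+\frac{\delta_i\epsilon^2}{2}.$$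
   Context: $\|x\|_M^2=x^TMx$; $\sigma_{\min}(M)$ is the smallest singular value of $M$. A function $\phi$ is $L$-weakly convex if $\phi(x)+\frac L2\|x\|^2$ is convex. The two bracketed quantities are the discrete Hamiltonians at frames $i$ and $i-1$, both evaluated with the same control value (the one used at frame $i$). *)

theory Defs
  imports "HOL-Analysis.Analysis"
begin

definition mnorm2 :: "real^'n^'n \<Rightarrow> real^'n \<Rightarrow> real" where
  "mnorm2 M x = x \<bullet> (M *v x)"

definition symmetric_pd :: "real^'n^'n \<Rightarrow> bool" where
  "symmetric_pd M \<longleftrightarrow> transpose M = M \<and> (\<forall>x. x \<noteq> 0 \<longrightarrow> x \<bullet> (M *v x) > 0)"

definition sigma_min :: "real^'n^'n \<Rightarrow> real" where
  "sigma_min M = Inf {norm (M *v x) | x. norm x = 1}"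

definition weakly_convex :: "real \<Rightarrow> ('a::real_inner \<Rightarrow> real) \<Rightarrow> bool" where
  "weakly_convex L \<phi> \<longleftrightarrow> convex_on UNIV (\<lambda>x. \<phi> x + L / 2 * (norm x)\<^sup>2)"

end

theory Submission
  imports Defs
begin

lemma convex_tangent:
  fixes g :: "'a::real_normed_vector \<Rightarrow> real"
  assumes cv: "convex_on UNIV g" and d: "(g has_derivative g') (at x)"
  shows "g x + g' (y - x) \<le> g y"
proof -
  define \<phi> where "\<phi> = (\<lambda>t::real. g (x + t *\<^sub>R (y - x)))"
  have lin: "linear g'" using d has_derivative_linear by blast
  have "convex_on UNIV \<phi>"
  proof (rule convex_onI)
    fix t a b :: real assume t: "0 < t" "t < 1"
    have "x + ((1 - t) *\<^sub>R a + t *\<^sub>R b) *\<^sub>R (y - x) = (1-t) *\<^sub>R (x + a *\<^sub>R (y - x)) + t *\<^sub>R (x + b *\<^sub>R (y - x))"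
      by (simp add: algebra_simps)
    then show "\<phi> ((1 - t) *\<^sub>R a + t *\<^sub>R b) \<le> (1 - t) * \<phi> a + t * \<phi> b"
      unfolding \<phi>_def using convex_onD[OF cv, of t] t by simp
  qed simp
  moreover have "(\<phi> has_field_derivative g' (y - x)) (at 0 within UNIV)"
  proof -
    have "((\<lambda>t::real. x + t *\<^sub>R (y - x)) has_derivative (\<lambda>t. t *\<^sub>R (y - x))) (at 0)"
      by (auto intro!: derivative_eq_intros)
    from has_derivative_compose[OF this] d
    have "(\<phi> has_derivative (\<lambda>t. g' (t *\<^sub>R (y - x)))) (at 0)"
      unfolding \<phi>_def by simp
    moreover have "(\<lambda>t. g' (t *\<^sub>R (y - x))) = (\<lambda>t. g' (y - x) * t)"
      using linear_scale[OF lin] by (auto simp: mult.commute)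
    ultimately show ?thesis by (simp add: has_field_derivative_def)
  qed
  ultimately have "\<phi> 1 - \<phi> 0 \<ge> g' (y - x) * (1 - 0)"
    by (intro convex_on_imp_above_tangent[where A=UNIV]) auto
  then show ?thesis unfolding \<phi>_def by simp
qed

lemma sym_inner:
  fixes M :: "real^'n^'n"
  assumes "transpose M = M"
  shows "x \<bullet> (M *v y) = y \<bullet> (M *v x)"
proof -
  have "x \<bullet> (M *v y) = (x v* M) \<bullet> y" by (simp add: dot_lmul_matrix)
  also have "x v* M = M *v x" using vector_transpose_matrix[of x M] assms by simp
  finally show ?thesis by (simp add: inner_commute)
qed

lemma sigma_min_props:
  fixes M :: "real^'n^'n"
  assumes M: "symmetric_pd M"
  shows "sigma_min M > 0 \<and> (\<forall>v. sigma_min M * (norm v)\<^sup>2 \<le> mnorm2 M v)"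
proof -
  have symM: "transpose M = M" and pd: "\<And>x. x \<noteq> 0 \<Longrightarrow> x \<bullet> (M *v x) > 0"
    using M by (auto simp: symmetric_pd_def)
  obtain k :: 'n where True by blast
  have ne: "sphere (0::real^'n) 1 \<noteq> {}"
  proof -
    have "norm (axis k (1::real)) = 1" by (rule norm_axis_1)
    then show ?thesis by (auto simp: sphere_def intro!: exI[of _ "axis k (1::real)"])
  qed
  have "continuous_on (sphere 0 1) (\<lambda>x::real^'n. x \<bullet> (M *v x))"
    by (intro continuous_intros)
  then obtain x where x: "x \<in> sphere 0 1" and xmin: "\<And>y. y \<in> sphere 0 1 \<Longrightarrow> x \<bullet> (M *v x) \<le> y \<bullet> (M *v y)"
    using continuous_attains_inf[OF compact_sphere ne] by blast
  define lam where "lam = x \<bullet> (M *v x)"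
  have nx: "norm x = 1" using x by simp
  then have "x \<noteq> 0" by auto
  then have lampos: "lam > 0" using pd lam_def by auto
  have gen: "lam * (norm v)\<^sup>2 \<le> v \<bullet> (M *v v)" for v
  proof (cases "v = 0")
    case True then show ?thesis by simp
  next
    case False
    define u where "u = (1 / norm v) *\<^sub>R v"
    have "norm u = 1" using False by (simp add: u_def)
    then have "lam \<le> u \<bullet> (M *v u)" using xmin lam_def by simp
    also have "u \<bullet> (M *v u) = (v \<bullet> (M *v v)) / (norm v)\<^sup>2"
      by (simp add: u_def matrix_vector_mult_scaleR power2_eq_square)
    finally show ?thesis using False by (simp add: field_simps)
  qed
  define z where "z = M *v x - lam *\<^sub>R x"
  define c where "c = z \<bullet> (M *v z) - lam * (norm z)\<^sup>2"
  have key: "2 * (norm z)\<^sup>2 \<le> s * c" if s: "s > 0" for s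
  proof -
    define N where "N = (norm (x - s *\<^sub>R z))\<^sup>2"
    define B where "B = z \<bullet> (M *v x)"
    define C where "C = z \<bullet> (M *v z)"
    define D where "D = z \<bullet> x"
    define Z where "Z = (norm z)\<^sup>2"
    have f1: "lam * N \<le> (x - s *\<^sub>R z) \<bullet> (M *v (x - s *\<^sub>R z))" unfolding N_def by (rule gen)
    have f2: "(x - s *\<^sub>R z) \<bullet> (M *v (x - s *\<^sub>R z)) = lam - 2 * s * B + s\<^sup>2 * C"
      using sym_inner[OF symM, of x z] unfolding B_def C_def
      by (simp add: lam_def matrix_vector_mult_diff_distrib matrix_vector_mult_scaleR inner_diff_left inner_diff_right algebra_simps power2_eq_square)
    have f3: "N = 1 - 2 * s * D + s\<^sup>2 * Z"
    proof -
      have "(norm (x - s *\<^sub>R z))\<^sup>2 = x \<bullet> x - 2 * s * (z \<bullet> x) + s\<^sup>2 * (z \<bullet> z)"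
        unfolding power2_norm_eq_inner by (simp add: inner_diff_left inner_diff_right inner_commute power2_eq_square algebra_simps)
      moreover have "x \<bullet> x = 1" using nx by (simp add: dot_square_norm)
      ultimately show ?thesis unfolding N_def D_def Z_def by (simp add: dot_square_norm)
    qed
    have f4: "Z = B - lam * D"
      unfolding Z_def B_def D_def by (simp add: power2_norm_eq_inner z_def inner_diff_right)
    have f5: "lam * N = lam - 2 * s * (lam * D) + s\<^sup>2 * (lam * Z)"
      unfolding f3 by (simp add: algebra_simps)
    have f6: "s * Z = s * B - s * (lam * D)" unfolding f4 by (simp add: algebra_simps)
    have "c = C - lam * Z" unfolding c_def C_def Z_def ..
    then have "s * (s * c) = s\<^sup>2 * C - s\<^sup>2 * (lam * Z)" by (simp add: right_diff_distrib power2_eq_square)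
    then have "s * (2 * (norm z)\<^sup>2) \<le> s * (s * c)"
      using f1 f2 f5 f6 unfolding Z_def[symmetric] by linarith
    then show ?thesis using s by simp
  qed
  have "z = 0"
  proof (rule ccontr)
    assume "z \<noteq> 0"
    then have zp: "(norm z)\<^sup>2 > 0" by simp
    define s where "s = (norm z)\<^sup>2 / (\<bar>c\<bar> + 1)"
    have sp: "s > 0" using zp by (simp add: s_def)
    have "s * c \<le> s * \<bar>c\<bar>" using sp by (simp add: mult_left_mono)
    also have "s * \<bar>c\<bar> < (norm z)\<^sup>2" using zp unfolding s_def
      by (simp add: field_simps)
    finally show False using key[OF sp] zp by simp
  qed
  then have Mx: "M *v x = lam *\<^sub>R x" by (simp add: z_def)
  define S where "S = {norm (M *v y) | y::real^'n. norm y = 1}"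
  have "sigma_min M \<le> norm (M *v x)" unfolding sigma_min_def
  proof (rule cInf_lower)
    show "bdd_below {norm (M *v x) |x::real^'n. norm x = 1}"
      by (rule bdd_belowI[of _ 0]) auto
  qed (use nx in auto)
  also have "norm (M *v x) = lam" using Mx nx lampos by simp
  finally have le: "sigma_min M \<le> lam" .
  have ge: "lam \<le> sigma_min M" unfolding sigma_min_def
  proof (rule cInf_greatest)
    show "{norm (M *v x) |x. norm x = 1} \<noteq> {}" using nx by auto
  next
    fix r assume "r \<in> {norm (M *v x) |x::real^'n. norm x = 1}"
    then obtain y :: "real^'n" where y: "norm y = 1" "r = norm (M *v y)" by auto
    have "lam \<le> y \<bullet> (M *v y)" using xmin y lam_def by simp
    also have "\<dots> \<le> norm y * norm (M *v y)" by (rule norm_cauchy_schwarz)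
    finally show "lam \<le> r" using y by simp
  qed
  show ?thesis using le ge lampos gen by (auto simp: mnorm2_def)
qed
theorem lemma12:
  fixes M :: "real^'n^'n" and P :: "real^'n \<Rightarrow> real"
    and th_i th_im1 th_im2 gE :: "real^'n"
    and d_i d_im1 eps L :: real
  assumes M: "symmetric_pd M"
    and d_i: "d_i > 0" and d_im1: "d_im1 > 0" and eps: "eps \<ge> 0"
    and Pdiff: "\<forall>x. P differentiable (at x)"
    and L: "L \<ge> 0" and Pwc: "weakly_convex L P"
    and gradE: "GDERIV (\<lambda>th. 1 / (2 * d_i\<^sup>2) *
                   mnorm2 M (th - (1 + d_i / d_im1) *\<^sub>R th_im1 + (d_i / d_im1) *\<^sub>R th_im2)
                 + P th) th_i :> gE"
    and crit: "2 * (1/2 * (norm gE)\<^sup>2) \<le> eps\<^sup>2"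
  shows "(1/2 * mnorm2 M ((1 / d_i) *\<^sub>R (th_i - th_im1)) + P th_i)
         - (1/2 * mnorm2 M ((1 / d_im1) *\<^sub>R (th_im1 - th_im2)) + P th_im1)
         \<le> (L * d_i\<^sup>2 + d_i) / (2 * sigma_min M) * mnorm2 M ((1 / d_i) *\<^sub>R (th_i - th_im1))
           + d_i * eps\<^sup>2 / 2"
proof -
  have symM: "transpose M = M" and pd: "\<And>x. x \<noteq> 0 \<Longrightarrow> x \<bullet> (M *v x) > 0"
    using M by (auto simp: symmetric_pd_def)
  have psd: "0 \<le> x \<bullet> (M *v x)" for x
    using pd[of x] by (cases "x = 0") auto
  define d where "d = d_i"
  define r where "r = d_i / d_im1"
  define cc where "cc = (1 + r) *\<^sub>R th_im1 - r *\<^sub>R th_im2"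
  define u where "u = th_i - cc"
  have Qeq: "\<And>th. 1 / (2 * d_i\<^sup>2) * mnorm2 M (th - (1 + d_i / d_im1) *\<^sub>R th_im1 + (d_i / d_im1) *\<^sub>R th_im2)
     = 1 / (2 * d\<^sup>2) * ((th - cc) \<bullet> (M *v (th - cc)))"
    by (simp add: mnorm2_def d_def r_def cc_def algebra_simps)
  have dpos: "d > 0" using d_i d_def by simp
  have dQ: "((\<lambda>th. 1 / (2 * d\<^sup>2) * ((th - cc) \<bullet> (M *v (th - cc)))) has_derivative
      (\<lambda>h. 1 / d\<^sup>2 * (h \<bullet> (M *v u)))) (at th_i)"
    apply (rule derivative_eq_intros bounded_linear.has_derivative[OF matrix_vector_mul_bounded_linear] | simp)+
    using sym_inner[OF symM] dpos unfolding u_def by (auto simp: field_simps power2_eq_square)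
  have dE: "((\<lambda>th. 1 / (2 * d\<^sup>2) * ((th - cc) \<bullet> (M *v (th - cc))) + P th) has_derivative (\<lambda>h. h \<bullet> gE)) (at th_i)"
    using gradE unfolding gderiv_def by (simp only: Qeq)
  have dP: "(P has_derivative (\<lambda>h. h \<bullet> gE - 1 / d\<^sup>2 * (h \<bullet> (M *v u)))) (at th_i)"
    using has_derivative_diff[OF dE dQ] by simp
  define g where "g = (\<lambda>x. P x + L / 2 * (norm x)\<^sup>2)"
  have cvg: "convex_on UNIV g" using Pwc unfolding weakly_convex_def g_def .
  have gEq: "g = (\<lambda>x. P x + L / 2 * (x \<bullet> x))" unfolding g_def by (simp add: dot_square_norm)
  have dg: "(g has_derivative (\<lambda>h. (h \<bullet> gE - 1 / d\<^sup>2 * (h \<bullet> (M *v u))) + L / 2 * (th_i \<bullet> h + h \<bullet> th_i))) (at th_i)"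
    unfolding gEq by (auto intro!: derivative_eq_intros dP)
  define a where "a = th_i - th_im1"
  define b where "b = th_im1 - th_im2"
  have tang: "g th_i + ((- a) \<bullet> gE - 1 / d\<^sup>2 * ((- a) \<bullet> (M *v u)) + L / 2 * (th_i \<bullet> (- a) + (- a) \<bullet> th_i)) \<le> g th_im1"
    using convex_tangent[OF cvg dg, of th_im1] unfolding a_def by simp
  have nn: "(norm th_im1)\<^sup>2 = (norm th_i)\<^sup>2 - 2 * (th_i \<bullet> a) + (norm a)\<^sup>2"
    unfolding a_def power2_norm_eq_inner by (simp add: inner_diff_left inner_diff_right inner_commute)
  have T: "P th_i - P th_im1 \<le> a \<bullet> gE - 1 / d\<^sup>2 * (a \<bullet> (M *v u)) + L / 2 * (norm a)\<^sup>2"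
    using tang nn unfolding g_def by (simp add: inner_commute algebra_simps)
  define v where "v = (1 / d_i) *\<^sub>R a"
  define w where "w = (1 / d_im1) *\<^sub>R b"
  have av: "a = d *\<^sub>R v" using dpos unfolding v_def d_def by simp
  have u1: "u = a - r *\<^sub>R b" unfolding u_def cc_def a_def b_def by (simp add: algebra_simps)
  have u2: "d *\<^sub>R (v - w) = a - r *\<^sub>R b"
    using d_i unfolding v_def w_def d_def r_def by (simp add: scaleR_diff_right)
  have uvw: "u = d *\<^sub>R (v - w)" using u1 u2 by simp
  have I1: "1 / d\<^sup>2 * (a \<bullet> (M *v u)) = v \<bullet> (M *v v) - v \<bullet> (M *v w)"
    using dpos unfolding av uvw
    by (simp add: matrix_vector_mult_scaleR matrix_vector_mult_diff_distrib inner_diff_right power2_eq_square right_diff_distrib[symmetric])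
  have I2: "0 \<le> v \<bullet> (M *v v) - 2 * (v \<bullet> (M *v w)) + w \<bullet> (M *v w)"
    using psd[of "v - w"] sym_inner[OF symM, of v w]
    by (simp add: matrix_vector_mult_diff_distrib inner_diff_right inner_diff_left)
  have I3: "a \<bullet> gE \<le> d * (eps\<^sup>2 + (norm v)\<^sup>2) / 2"
  proof -
    have "a \<bullet> gE = d * (v \<bullet> gE)" unfolding av by simp
    also have "v \<bullet> gE \<le> norm v * norm gE" by (rule norm_cauchy_schwarz)
    also have "norm v * norm gE \<le> ((norm gE)\<^sup>2 + (norm v)\<^sup>2) / 2"
      using sum_squares_bound[of "norm v" "norm gE"] by (simp add: algebra_simps)
    also have "\<dots> \<le> (eps\<^sup>2 + (norm v)\<^sup>2) / 2" using crit by simp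
    finally show ?thesis using dpos by (simp add: mult_left_mono)
  qed
  have I4: "(norm a)\<^sup>2 = d\<^sup>2 * (norm v)\<^sup>2" unfolding av using dpos by (simp add: power_mult_distrib)
  obtain sg where sg: "sg = sigma_min M" by blast
  have sgpos: "sg > 0" and sgle: "sg * (norm v)\<^sup>2 \<le> mnorm2 M v"
    using sigma_min_props[OF M] sg by auto
  define V where "V = mnorm2 M v"
  define W where "W = mnorm2 M w"
  have KK: "L * d\<^sup>2 + d \<ge> 0" using L dpos by simp
  have I5: "(L * d\<^sup>2 + d) / 2 * (norm v)\<^sup>2 \<le> (L * d\<^sup>2 + d) / (2 * sg) * V"
  proof -
    have "(norm v)\<^sup>2 \<le> V / sg" using sgle sgpos unfolding V_def by (simp add: field_simps)
    then have "(L * d\<^sup>2 + d) / 2 * (norm v)\<^sup>2 \<le> (L * d\<^sup>2 + d) / 2 * (V / sg)"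
      using KK by (intro mult_left_mono) auto
    then show ?thesis by simp
  qed
  have I6: "L / 2 * (d\<^sup>2 * (norm v)\<^sup>2) + d * (eps\<^sup>2 + (norm v)\<^sup>2) / 2
     = (L * d\<^sup>2 + d) / 2 * (norm v)\<^sup>2 + d * eps\<^sup>2 / 2"
    by (simp add: field_simps)
  have main: "1/2 * V + P th_i - (1/2 * W + P th_im1) \<le> (L * d\<^sup>2 + d) / (2 * sg) * V + d * eps\<^sup>2 / 2"
    using T I1 I2 I3 I5 I6 I4[THEN arg_cong[where f="\<lambda>t. L / 2 * t"]] unfolding V_def W_def mnorm2_def by linarith
  then show ?thesis unfolding V_def W_def v_def w_def a_def b_def sg d_def by simp
qed

end
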